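(* Let $X$, $Y$, $Z$ be positive, absolutely continuous random variables with densities $f_X$, $f_Y$, $f_Z$, such that $X$ and $Y$ are independent and $Z \stackrel{d}{=} X/(X+Y)$ (so $Z$ takes values in $(0,1)$). Suppose that the density of $Y$ admits the decomposition $$f_Y(sx)=\mathbb{A}(s)\,\mathbb{B}(x)\,\mathbb{C}(sx),\qquad x,s>0,$$ for some positive real-valued functions $\mathbb{A},\mathbb{B},\mathbb{C}$ on $(0,\infty)$, where $$\mathbb{C}(x)=(1+\theta x)^{-p},\qquad x>0,$$ for some constants $\theta,p>0$. Then the density of $X$ is given, for $x>0$, by $$f_X(x)=\frac{1}{x\,\mathbb{B}(x)}\;\mathcal{G}_p^{-1}\left\{\frac{1}{s^{p}\,\mathbb{A}\!\left(\frac{1}{\theta s}\right)}\left(\frac{\theta s}{1+\theta s}\right)^2 f_Z\!\left(\frac{\theta s}{1+\theta s}\right)\right\}(x).$$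
   Context: For $p>0$, the generalized Stieltjes transform of a function $g$ on $(0,\infty)$ is $\mathcal{G}_p\{g\}(y)=\int_0^\infty g(x)\,(y+x)^{-p}\,\mathrm{d}x$, $y>0$; $\mathcal{G}_p^{-1}$ denotes its inverse, i.e. $\mathcal{G}_p^{-1}\{F\}$ is the function $g$ with $\mathcal{G}_p\{g\}=F$, and $\mathcal{G}_p^{-1}\{F\}(x)$ is this function evaluated at $x$. The notation $\stackrel{d}{=}$ means equality in distribution. *)

theory Defs
  imports "HOL-Probability.Probability"
begin

definition gen_stieltjes :: "real \<Rightarrow> (real \<Rightarrow> real) \<Rightarrow> real \<Rightarrow> real" where
  "gen_stieltjes p g y = (LINT x:{0<..}|lborel. g x * (y + x) powr (- p))"

text \<open>g is (a version of) the inverse generalized Stieltjes transform of F: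
  the transform of g exists and equals F at (almost) every y > 0.\<close>
definition is_gen_stieltjes_inverse :: "real \<Rightarrow> (real \<Rightarrow> real) \<Rightarrow> (real \<Rightarrow> real) \<Rightarrow> bool" where
  "is_gen_stieltjes_inverse p F g \<longleftrightarrow>
     (AE y in lborel. y > 0 \<longrightarrow>
        set_integrable lborel {0<..} (\<lambda>x. g x * (y + x) powr (- p)) \<and>
        gen_stieltjes p g y = F y)"

end

theory Submission
  imports Defs
begin

lemma nn_set_int:
  fixes f :: "real \<Rightarrow> real"
  assumes [measurable]: "f \<in> borel_measurable borel" "A \<in> sets borel" and nn: "\<And>x. f x \<ge> 0"
  shows "(\<integral>\<^sup>+x. ennreal (f x) * indicator A x \<partial>lborel) =
     (if set_integrable lborel A f then ennreal (LINT x:A|lborel. f x) else \<infinity>)"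
proof -
  have eq: "(\<integral>\<^sup>+x. ennreal (f x) * indicator A x \<partial>lborel) = (\<integral>\<^sup>+x. ennreal (indicator A x *\<^sub>R f x) \<partial>lborel)"
    by (intro nn_integral_cong) (auto simp: indicator_def)
  show ?thesis
  proof (cases "set_integrable lborel A f")
    case True
    then show ?thesis unfolding eq set_integrable_def set_lebesgue_integral_def
      by (subst nn_integral_eq_integral) (auto simp: nn indicator_def)
  next
    case False
    then have "\<not> (\<integral>\<^sup>+x. ennreal (norm (indicator A x *\<^sub>R f x)) \<partial>lborel) < \<infinity>"
      unfolding set_integrable_def integrable_iff_bounded by auto
    moreover have "(\<integral>\<^sup>+x. ennreal (norm (indicator A x *\<^sub>R f x)) \<partial>lborel) = (\<integral>\<^sup>+x. ennreal (indicator A x *\<^sub>R f x) \<partial>lborel)"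
      by (intro nn_integral_cong) (auto simp: indicator_def nn)
    ultimately show ?thesis using False eq by (simp add: less_top[symmetric])
  qed
qed

lemma set_integrable_lebesgue_iff:
  fixes f :: "real \<Rightarrow> real"
  assumes [measurable]: "f \<in> borel_measurable borel" "A \<in> sets borel"
  shows "set_integrable lebesgue A f \<longleftrightarrow> set_integrable lborel A f"
    and "set_integrable lborel A f \<Longrightarrow> (LINT x:A|lebesgue. f x) = (LINT x:A|lborel. f x)"
  unfolding set_integrable_def set_lebesgue_integral_def
  by (auto intro!: integrable_completion integral_completion)

lemma nn_subst:
  fixes f g g' :: "real \<Rightarrow> real"
  assumes S[measurable]: "S \<in> sets borel" and gS[measurable]: "g ` S \<in> sets borel"
    and [measurable]: "f \<in> borel_measurable borel" "g \<in> borel_measurable borel" "g' \<in> borel_measurable borel"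
    and nn: "\<And>x. f x \<ge> 0"
    and der: "\<And>x. x \<in> S \<Longrightarrow> (g has_field_derivative g' x) (at x within S)"
    and inj: "inj_on g S"
  shows "(\<integral>\<^sup>+x. ennreal (f x) * indicator (g ` S) x \<partial>lborel) =
         (\<integral>\<^sup>+x. ennreal (\<bar>g' x\<bar> * f (g x)) * indicator S x \<partial>lborel)"
proof -
  have Sl: "S \<in> sets lebesgue" by (simp add: sets_completionI_sets)
  have iff: "set_integrable lborel (g ` S) f \<longleftrightarrow> set_integrable lborel S (\<lambda>x. \<bar>g' x\<bar> * f (g x))"
    using absolutely_integrable_change_of_variables_1'[OF Sl der inj, of f]
    by (simp add: set_integrable_lebesgue_iff)
  show ?thesis
  proof (cases "set_integrable lborel (g ` S) f")
    case True
    then have T2: "set_integrable lborel S (\<lambda>x. \<bar>g' x\<bar> * f (g x))" using iff by simp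
    have "integral S (\<lambda>x. \<bar>g' x\<bar> * f (g x)) = integral (g ` S) f"
      using has_absolute_integral_change_of_variables_1'[OF Sl der inj, of f "integral (g ` S) f"]
        True by (simp add: set_integrable_lebesgue_iff)
    moreover have hm: "(\<lambda>x. \<bar>g' x\<bar> * f (g x)) \<in> borel_measurable borel" by measurable
    moreover have "set_integrable lebesgue S (\<lambda>x. \<bar>g' x\<bar> * f (g x))"
      using T2 hm by (simp add: set_integrable_lebesgue_iff(1))
    moreover have "set_integrable lebesgue (g ` S) f"
      using True by (simp add: set_integrable_lebesgue_iff(1))
    ultimately have "(LINT x:S|lborel. \<bar>g' x\<bar> * f (g x)) = (LINT x:(g ` S)|lborel. f x)"
      using True T2 set_lebesgue_integral_eq_integral(2) set_integrable_lebesgue_iff(2)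
      by (metis S gS assms(3))
    then show ?thesis
      by (subst nn_set_int, simp_all add: nn True)+ (simp add: nn_set_int nn T2)
  next
    case False
    then show ?thesis using iff by (simp add: nn_set_int nn)
  qed
qed


lemma partA:
  fixes fZ :: "real \<Rightarrow> real" and \<theta> :: real
  assumes th: "\<theta> > 0" and [measurable]: "fZ \<in> borel_measurable borel" "T \<in> sets borel"
    and nn: "\<And>x. fZ x \<ge> 0"
  shows "(\<integral>\<^sup>+z. ennreal (fZ z) * indicator {z. 0<z \<and> z<1 \<and> z/(\<theta>*(1-z)) \<in> T} z \<partial>lborel) =
         (\<integral>\<^sup>+s. ennreal (fZ (\<theta>* s/(1+\<theta>* s)) * (\<theta>/(1+\<theta>* s)^2)) * indicator {0<..} s * indicator T s \<partial>lborel)"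
proof -
  define g where "g s = \<theta>* s/(1+\<theta>* s)" for s :: real
  define g' where "g' s = \<theta>/(1+\<theta>* s)^2" for s :: real
  define S where "S = {0<..} \<inter> T"
  have img: "g ` S = {z. 0<z \<and> z<1 \<and> z/(\<theta>*(1-z)) \<in> T}"
  proof safe
    fix s assume "s \<in> S"
    then have s: "s > 0" "s \<in> T" by (auto simp: S_def)
    have d: "1 + \<theta> * s > 0" using s th by (simp add: add_pos_pos)
    show "0 < g s" using s th d by (simp add: g_def)
    show "g s < 1" using s th d by (simp add: g_def)
    have e1: "1 - \<theta> * s / (1 + \<theta> * s) = 1 / (1 + \<theta> * s)" using d by (simp add: field_simps)
    have "g s / (\<theta> * (1 - g s)) = s" using s th d e1 by (simp add: g_def)
    then show "g s / (\<theta> * (1 - g s)) \<in> T" using s by simp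
  next
    fix z assume z: "0 < z" "z < 1" "z / (\<theta> * (1 - z)) \<in> T"
    have "\<theta> * (z / (\<theta> * (1 - z))) = z / (1-z)" using z th by simp
    moreover have "1 + z/(1-z) = 1/(1-z)" using z by (simp add: field_simps)
    ultimately have "g (z / (\<theta> * (1 - z))) = z" using z th by (simp add: g_def)
    moreover have "z / (\<theta> * (1 - z)) \<in> S" using z th by (simp add: S_def)
    ultimately show "z \<in> g ` S" by (metis image_eqI)
  qed
  have [measurable]: "g \<in> borel_measurable borel" "g' \<in> borel_measurable borel"
    unfolding g_def g'_def by measurable
  have Sm[measurable]: "S \<in> sets borel" unfolding S_def by measurable
  have gSm: "g ` S \<in> sets borel" unfolding img by measurable
  have der: "(g has_field_derivative g' s) (at s within S)" if "s \<in> S" for s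
  proof -
    have "1 + \<theta>* s > 0" using that th by (auto simp: S_def intro: add_pos_pos)
    then show ?thesis unfolding g_def g'_def
      by (auto intro!: derivative_eq_intros simp: field_simps power2_eq_square)
  qed
  have inj: "inj_on g S"
  proof (rule inj_onI)
    fix a b assume "a \<in> S" "b \<in> S" "g a = g b"
    then have "a > 0" "b > 0" "\<theta>*a/(1+\<theta>*a) = \<theta>*b/(1+\<theta>*b)" by (auto simp: S_def g_def)
    moreover have "1+\<theta>*a > 0" "1+\<theta>*b > 0" using th \<open>a>0\<close> \<open>b>0\<close> by (simp_all add: add_pos_pos)
    ultimately have "\<theta>*a*(1+\<theta>*b) = \<theta>*b*(1+\<theta>*a)" using th by (simp add: field_simps)
    then show "a = b" using th by (simp add: algebra_simps)
  qed
  have "(\<integral>\<^sup>+z. ennreal (fZ z) * indicator (g ` S) z \<partial>lborel) =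
        (\<integral>\<^sup>+x. ennreal (\<bar>g' x\<bar> * fZ (g x)) * indicator S x \<partial>lborel)"
    by (rule nn_subst[OF Sm gSm _ _ _ nn der inj]) measurable
  also have "\<dots> = (\<integral>\<^sup>+s. ennreal (fZ (\<theta>* s/(1+\<theta>* s)) * (\<theta>/(1+\<theta>* s)^2)) * indicator {0<..} s * indicator T s \<partial>lborel)"
    using th by (intro nn_integral_cong) (auto simp: S_def g_def g'_def indicator_def mult.commute)
  finally show ?thesis unfolding img .
qed

lemma partB:
  fixes fY :: "real \<Rightarrow> real" and \<theta> x :: real
  assumes th: "\<theta> > 0" and x: "x > 0" and [measurable]: "fY \<in> borel_measurable borel" "T \<in> sets borel"
    and nn: "\<And>x. fY x \<ge> 0"
  shows "(\<integral>\<^sup>+y. ennreal (fY y) * indicator {y. 0<y \<and> x/(\<theta>*y) \<in> T} y \<partial>lborel) =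
         (\<integral>\<^sup>+s. ennreal (fY (x/(\<theta>* s)) * (x/(\<theta>* s^2))) * indicator {0<..} s * indicator T s \<partial>lborel)"
proof -
  define g where "g s = x/(\<theta>* s)" for s :: real
  define g' where "g' s = - x/(\<theta>* s^2)" for s :: real
  define S where "S = {0<..} \<inter> T"
  have img: "g ` S = {y. 0<y \<and> x/(\<theta>*y) \<in> T}"
  proof safe
    fix s assume "s \<in> S"
    then have s: "s > 0" "s \<in> T" by (auto simp: S_def)
    show "0 < g s" using s th x by (simp add: g_def)
    have "x / (\<theta> * g s) = s" using s th x by (simp add: g_def field_simps)
    then show "x / (\<theta> * g s) \<in> T" using s by simp
  next
    fix y assume y: "0 < y" "x / (\<theta> * y) \<in> T"
    have "g (x / (\<theta> * y)) = y" using y th x by (simp add: g_def field_simps)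
    moreover have "x / (\<theta> * y) \<in> S" using y th x by (simp add: S_def)
    ultimately show "y \<in> g ` S" by (metis image_eqI)
  qed
  have [measurable]: "g \<in> borel_measurable borel" "g' \<in> borel_measurable borel"
    unfolding g_def g'_def by measurable
  have Sm[measurable]: "S \<in> sets borel" unfolding S_def by measurable
  have gSm: "g ` S \<in> sets borel" unfolding img by measurable
  have der: "(g has_field_derivative g' s) (at s within S)" if "s \<in> S" for s
  proof -
    have "s > 0" using that by (auto simp: S_def)
    then show ?thesis unfolding g_def g'_def using th
      by (auto intro!: derivative_eq_intros simp: field_simps power2_eq_square)
  qed
  have inj: "inj_on g S"
  proof (rule inj_onI)
    fix a b assume "a \<in> S" "b \<in> S" "g a = g b"
    then have "a > 0" "b > 0" "x/(\<theta>*a) = x/(\<theta>*b)" by (auto simp: S_def g_def)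
    then show "a = b" using th x by (simp add: field_simps)
  qed
  have "(\<integral>\<^sup>+z. ennreal (fY z) * indicator (g ` S) z \<partial>lborel) =
        (\<integral>\<^sup>+x. ennreal (\<bar>g' x\<bar> * fY (g x)) * indicator S x \<partial>lborel)"
    by (rule nn_subst[OF Sm gSm _ _ _ nn der inj]) measurable
  also have "\<dots> = (\<integral>\<^sup>+s. ennreal (fY (x/(\<theta>* s)) * (x/(\<theta>* s^2))) * indicator {0<..} s * indicator T s \<partial>lborel)"
    using th x by (intro nn_integral_cong) (auto simp: S_def g_def g'_def indicator_def mult.commute)
  finally show ?thesis unfolding img .
qed

theorem theorem3:
  fixes M :: "'a measure"
    and X Y Z :: "'a \<Rightarrow> real"
    and fX fY fZ :: "real \<Rightarrow> real"
    and A B C :: "real \<Rightarrow> real"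
    and \<theta> p :: real
  assumes "prob_space M"
    and "AE \<omega> in M. X \<omega> > 0" and "AE \<omega> in M. Y \<omega> > 0" and "AE \<omega> in M. Z \<omega> > 0"
    and "\<And>x. fX x \<ge> 0" and "\<And>x. fY x \<ge> 0" and "\<And>x. fZ x \<ge> 0"
    and "distributed M lborel X (\<lambda>x. ennreal (fX x))"
    and "distributed M lborel Y (\<lambda>x. ennreal (fY x))"
    and "distributed M lborel Z (\<lambda>x. ennreal (fZ x))"
    and "prob_space.indep_var M borel X borel Y"
    and "distr M borel Z = distr M borel (\<lambda>\<omega>. X \<omega> / (X \<omega> + Y \<omega>))"
    and "\<And>x. x > 0 \<Longrightarrow> A x > 0" and "\<And>x. x > 0 \<Longrightarrow> B x > 0" and "\<And>x. x > 0 \<Longrightarrow> C x > 0"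
    and "\<theta> > 0" and "p > 0"
    and "\<And>x. x > 0 \<Longrightarrow> C x = (1 + \<theta> * x) powr (- p)"
    and "\<And>x s. x > 0 \<Longrightarrow> s > 0 \<Longrightarrow> fY (s * x) = A s * B x * C (s * x)"
  shows "is_gen_stieltjes_inverse p
           (\<lambda>s. 1 / (s powr p * A (1 / (\<theta> * s))) * (\<theta> * s / (1 + \<theta> * s))\<^sup>2
                 * fZ (\<theta> * s / (1 + \<theta> * s)))
           (\<lambda>x. x * B x * fX x)"
  proof -
  interpret P: prob_space M by (rule assms(1))
  have th: "\<theta> > 0" and pp: "p > 0" using assms by auto
  have fXm[measurable]: "fX \<in> borel_measurable borel"
    using distributed_real_measurable[OF _ assms(8)] assms(5) by simp
  have fYm[measurable]: "fY \<in> borel_measurable borel"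
    using distributed_real_measurable[OF _ assms(9)] assms(6) by simp
  have fZm[measurable]: "fZ \<in> borel_measurable borel"
    using distributed_real_measurable[OF _ assms(10)] assms(7) by simp
  have fXm'[measurable]: "fX \<in> borel_measurable lborel" "fY \<in> borel_measurable lborel" "fZ \<in> borel_measurable lborel"
    by simp_all
  have Xm[measurable]: "X \<in> borel_measurable M" using distributed_measurable[OF assms(8)] by simp
  have Ym[measurable]: "Y \<in> borel_measurable M" using distributed_measurable[OF assms(9)] by simp
  have Zm[measurable]: "Z \<in> borel_measurable M" using distributed_measurable[OF assms(10)] by simp
  define D1 where "D1 s = ennreal (fZ (\<theta> * s/(1+\<theta> * s)) * (\<theta>/(1+\<theta> * s)^2)) * indicator {0<..} s" for s
  define H where "H x s = ennreal (fX x * fY (x/(\<theta> * s)) * (x/(\<theta> * s^2))) * indicator {0<..} x" for x s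
  define D2 where "D2 s = (\<integral>\<^sup>+x. H x s \<partial>lborel) * indicator {0<..} s" for s
  have D1m[measurable]: "D1 \<in> borel_measurable lborel" unfolding D1_def by measurable
  have Hm[measurable]: "(\<lambda>(x,s). H x s) \<in> borel_measurable (lborel \<Otimes>\<^sub>M lborel)" unfolding H_def by measurable
  have Hm2: "(\<lambda>(s,x). H x s) \<in> borel_measurable (lborel \<Otimes>\<^sub>M lborel)" unfolding H_def by measurable
  have D2m[measurable]: "D2 \<in> borel_measurable lborel"
    unfolding D2_def using lborel.borel_measurable_nn_integral[OF Hm2] by measurable
  have indB: "distr M borel X \<Otimes>\<^sub>M distr M borel Y = distr M (borel \<Otimes>\<^sub>M borel) (\<lambda>\<omega>. (X \<omega>, Y \<omega>))"
    using P.indep_var_distribution_eq assms(11) by blast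
  have e1: "distr M lborel X = distr M borel X" "distr M lborel Y = distr M borel Y"
    by (rule distr_cong; simp)+
  have e2: "distr M (lborel \<Otimes>\<^sub>M lborel) (\<lambda>\<omega>. (X \<omega>, Y \<omega>)) = distr M (borel \<Otimes>\<^sub>M borel) (\<lambda>\<omega>. (X \<omega>, Y \<omega>))"
    by (rule distr_cong) (auto intro: sets_pair_measure_cong)
  have joint: "distributed M (lborel \<Otimes>\<^sub>M lborel) (\<lambda>\<omega>. (X \<omega>, Y \<omega>)) (\<lambda>(x,y). ennreal (fX x) * ennreal (fY y))"
    by (rule P.distributed_joint_indep'[OF sigma_finite_lborel sigma_finite_lborel assms(8) assms(9)])
       (simp add: e1 e2 indB)
  have key: "(\<integral>\<^sup>+s. D1 s * indicator T s \<partial>lborel) = (\<integral>\<^sup>+s. D2 s * indicator T s \<partial>lborel)"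
    if T[measurable]: "T \<in> sets borel" for T
  proof -
    define U where "U = {z. 0<z \<and> z<1 \<and> z/(\<theta>*(1-z)) \<in> T}"
    define V where "V = {(x,y). 0<x \<and> 0<y \<and> x/(\<theta>*y) \<in> T}"
    define R where "R \<omega> = X \<omega> / (X \<omega> + Y \<omega>)" for \<omega>
    define F where "F xy = (case xy of (x,y) \<Rightarrow> ennreal (fX x) * ennreal (fY y)) * indicator V xy" for xy
    have Rm[measurable]: "R \<in> borel_measurable M" unfolding R_def by measurable
    have Um[measurable]: "U \<in> sets borel" unfolding U_def by measurable
    have Vm[measurable]: "V \<in> sets (lborel \<Otimes>\<^sub>M lborel)"
    proof -
      have "{xy \<in> space (lborel \<Otimes>\<^sub>M lborel). 0 < fst xy \<and> 0 < snd xy \<and> fst xy/(\<theta>* snd xy) \<in> T} \<in> sets (lborel \<Otimes>\<^sub>M lborel)"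
        by measurable
      moreover have "{xy \<in> space (lborel \<Otimes>\<^sub>M lborel). 0 < fst xy \<and> 0 < snd xy \<and> fst xy/(\<theta>* snd xy) \<in> T} = V"
        by (auto simp: V_def space_pair_measure)
      ultimately show ?thesis by simp
    qed
    have Fm[measurable]: "F \<in> borel_measurable (lborel \<Otimes>\<^sub>M lborel)" unfolding F_def by measurable
    have ae: "AE \<omega> in M. (\<omega> \<in> R -` U \<inter> space M) = (\<omega> \<in> (\<lambda>\<omega>. (X \<omega>, Y \<omega>)) -` V \<inter> space M)"
      using assms(2,3)
    proof (eventually_elim)
      case (elim \<omega>)
      have "X \<omega> + Y \<omega> > 0" using elim by simp
      have "1 - X \<omega>/(X \<omega>+Y \<omega>) = Y \<omega>/(X \<omega>+Y \<omega>)" using elim by (simp add: field_simps)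
      then have "R \<omega> / (\<theta> * (1 - R \<omega>)) = X \<omega> / (\<theta> * Y \<omega>)"
        using elim th unfolding R_def by simp
      moreover have "0 < R \<omega>" "R \<omega> < 1" using elim unfolding R_def by (auto simp: field_simps)
      ultimately show ?case using elim by (auto simp: U_def V_def)
    qed
    have "(\<integral>\<^sup>+s. D1 s * indicator T s \<partial>lborel) = (\<integral>\<^sup>+z. ennreal (fZ z) * indicator U z \<partial>lborel)"
      unfolding U_def D1_def by (rule partA[symmetric]) (simp_all add: th assms(7))
    also have "\<dots> = emeasure (density lborel (\<lambda>x. ennreal (fZ x))) U"
      by (simp add: emeasure_density)
    also have "\<dots> = emeasure (distr M lborel Z) U"
      using distributed_distr_eq_density[OF assms(10)] by simp
    also have "\<dots> = emeasure (distr M borel Z) U"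
      by (simp add: emeasure_distr)
    also have "\<dots> = emeasure (distr M borel R) U"
      using assms(12) unfolding R_def by simp
    also have "\<dots> = emeasure M (R -` U \<inter> space M)"
      by (simp add: emeasure_distr)
    also have "\<dots> = emeasure M ((\<lambda>\<omega>. (X \<omega>, Y \<omega>)) -` V \<inter> space M)"
      by (rule emeasure_eq_AE[OF ae]) measurable
    also have "\<dots> = emeasure (distr M (lborel \<Otimes>\<^sub>M lborel) (\<lambda>\<omega>. (X \<omega>, Y \<omega>))) V"
    proof -
      have XYm: "(\<lambda>\<omega>. (X \<omega>, Y \<omega>)) \<in> measurable M (lborel \<Otimes>\<^sub>M lborel)"
        by (intro measurable_Pair) simp_all
      show ?thesis by (rule emeasure_distr[OF XYm Vm, symmetric])
    qed
    also have "\<dots> = emeasure (density (lborel \<Otimes>\<^sub>M lborel) (\<lambda>(x,y). ennreal (fX x) * ennreal (fY y))) V"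
      using distributed_distr_eq_density[OF joint] by simp
    also have "\<dots> = integral\<^sup>N (lborel \<Otimes>\<^sub>M lborel) F"
      unfolding F_def by (rule emeasure_density[OF distributed_borel_measurable[OF joint] Vm])
    also have "\<dots> = (\<integral>\<^sup>+x. \<integral>\<^sup>+y. F (x,y) \<partial>lborel \<partial>lborel)"
      by (rule lborel.nn_integral_fst[symmetric]) measurable
    also have "\<dots> = (\<integral>\<^sup>+x. \<integral>\<^sup>+s. H x s * indicator {0<..} s * indicator T s \<partial>lborel \<partial>lborel)"
    proof (rule nn_integral_cong)
      fix x :: real
      show "(\<integral>\<^sup>+y. F (x,y) \<partial>lborel) = (\<integral>\<^sup>+s. H x s * indicator {0<..} s * indicator T s \<partial>lborel)"
      proof (cases "x > 0")
        case False
        then show ?thesis by (simp add: F_def H_def V_def)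
      next
        case True
        have "(\<integral>\<^sup>+y. F (x,y) \<partial>lborel) = (\<integral>\<^sup>+y. ennreal (fX x) * (ennreal (fY y) * indicator {y. 0<y \<and> x/(\<theta>*y) \<in> T} y) \<partial>lborel)"
          using True by (intro nn_integral_cong) (auto simp: F_def V_def indicator_def)
        also have "\<dots> = ennreal (fX x) * (\<integral>\<^sup>+y. ennreal (fY y) * indicator {y. 0<y \<and> x/(\<theta>*y) \<in> T} y \<partial>lborel)"
          by (rule nn_integral_cmult) measurable
        also have "\<dots> = ennreal (fX x) * (\<integral>\<^sup>+s. ennreal (fY (x/(\<theta> * s)) * (x/(\<theta> * s^2))) * indicator {0<..} s * indicator T s \<partial>lborel)"
          by (subst partB[OF th True fYm T assms(6)]) simp
        also have "\<dots> = (\<integral>\<^sup>+s. ennreal (fX x) * (ennreal (fY (x/(\<theta> * s)) * (x/(\<theta> * s^2))) * indicator {0<..} s * indicator T s) \<partial>lborel)"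
          by (rule nn_integral_cmult[symmetric]) measurable
        also have "\<dots> = (\<integral>\<^sup>+s. H x s * indicator {0<..} s * indicator T s \<partial>lborel)"
        proof (rule nn_integral_cong)
          fix s :: real
          show "ennreal (fX x) * (ennreal (fY (x/(\<theta> * s)) * (x/(\<theta> * s^2))) * indicator {0<..} s * indicator T s) =
                H x s * indicator {0<..} s * indicator T s"
          proof (cases "s > 0")
            case True
            then have nn0: "0 \<le> fY (x/(\<theta> * s)) * (x/(\<theta> * s^2))" using \<open>x > 0\<close> th assms(6) by simp
            have m: "ennreal (fX x * fY (x/(\<theta> * s)) * (x/(\<theta> * s^2))) = ennreal (fX x) * ennreal (fY (x/(\<theta> * s)) * (x/(\<theta> * s^2)))"
              by (metis ennreal_mult assms(5) nn0 mult.assoc)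
            show ?thesis unfolding H_def m using \<open>x > 0\<close> by (simp add: mult.assoc)
          qed (simp add: H_def)
        qed
        finally show ?thesis .
      qed
    qed
    also have "\<dots> = (\<integral>\<^sup>+s. \<integral>\<^sup>+x. H x s * indicator {0<..} s * indicator T s \<partial>lborel \<partial>lborel)"
      by (rule lborel_pair.Fubini'[symmetric]) measurable
    also have "\<dots> = (\<integral>\<^sup>+s. D2 s * indicator T s \<partial>lborel)"
      unfolding D2_def by (intro nn_integral_cong) (simp add: nn_integral_multc mult.assoc)
    finally show ?thesis .
  qed
  have deq: "density lborel D1 = density lborel D2"
    by (rule measure_eqI) (auto simp: emeasure_density key)
  have ae: "AE s in lborel. D1 s = D2 s"
    by (rule sigma_finite_measure.density_unique[OF sigma_finite_lborel D1m D2m deq])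
  have pt: "s > 0 \<longrightarrow>
        set_integrable lborel {0<..} (\<lambda>x. x * B x * fX x * (s + x) powr (- p)) \<and>
        gen_stieltjes p (\<lambda>x. x * B x * fX x) s =
          1 / (s powr p * A (1 / (\<theta> * s))) * (\<theta> * s / (1 + \<theta> * s))\<^sup>2 * fZ (\<theta> * s / (1 + \<theta> * s))"
    if eq: "D1 s = D2 s" for s
  proof
    assume s: "s > 0"
    define Aa where "Aa = A (1/(\<theta> * s))"
    have Aa: "Aa > 0" unfolding Aa_def using assms(13) s th by simp
    define K where "K = Aa * s powr p / (\<theta> * s^2)"
    have K: "K > 0" unfolding K_def using Aa s th by simp
    have fYeq: "fY (x/(\<theta> * s)) = Aa * B x * ((s+x) powr (-p) * s powr p)" if x: "x > 0" for x
    proof -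
      have "fY (x/(\<theta> * s)) = fY ((1/(\<theta> * s)) * x)" by simp
      also have "\<dots> = Aa * B x * C ((1/(\<theta> * s)) * x)"
        unfolding Aa_def using assms(19)[of x "1/(\<theta> * s)"] x s th by simp
      also have "C ((1/(\<theta> * s)) * x) = (1 + \<theta> * (1 / (\<theta> * s) * x)) powr (-p)"
        using assms(18) x s th by simp
      also have "\<dots> = (s+x) powr (-p) * s powr p"
      proof -
        have "1 + \<theta> * (1 / (\<theta> * s) * x) = (s+x)/s" using x s th by (simp add: field_simps)
        then have "(1 + \<theta> * (1 / (\<theta> * s) * x)) powr (-p) = (s+x) powr (-p) / s powr (-p)"
          using x s by (simp add: powr_divide)
        then show ?thesis by (simp add: powr_minus_divide divide_inverse powr_minus)
      qed
      finally show ?thesis .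
    qed
    define h where "h x = indicator {0<..} x * (fX x * fY (x/(\<theta> * s)) * (x/(\<theta> * s^2))) / K" for x
    have hm[measurable]: "h \<in> borel_measurable lborel" unfolding h_def by measurable
    have hnn: "h x \<ge> 0" for x
      unfolding h_def using K th s assms(5,6) by (auto simp: indicator_def)
    have h_eq: "indicator {0<..} x *\<^sub>R (x * B x * fX x * (s + x) powr (- p)) = h x" for x
    proof (cases "x > 0")
      case True
      then show ?thesis unfolding h_def fYeq[OF True] K_def using s th Aa
        by (simp add: field_simps power2_eq_square)
    qed (simp add: h_def)
    have "(\<integral>\<^sup>+x. ennreal (h x) \<partial>lborel) = (\<integral>\<^sup>+x. H x s * ennreal (1/K) \<partial>lborel)"
    proof (rule nn_integral_cong)
      fix x :: real
      show "ennreal (h x) = H x s * ennreal (1/K)"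
      proof (cases "x > 0")
        case True
        then have "0 \<le> fX x * fY (x/(\<theta> * s)) * (x/(\<theta> * s^2))" using s th assms(5,6) by simp
        then show ?thesis using True K unfolding h_def H_def
          by (simp add: ennreal_mult[symmetric] divide_inverse)
      qed (simp add: h_def H_def)
    qed
    also have "\<dots> = D2 s * ennreal (1/K)"
      using s by (simp add: nn_integral_multc D2_def)
    also have "\<dots> = ennreal (fZ (\<theta> * s/(1+\<theta> * s)) * (\<theta>/(1+\<theta> * s)^2) / K)"
    proof -
      have "0 \<le> fZ (\<theta> * s/(1+\<theta> * s)) * (\<theta>/(1+\<theta> * s)^2)" using assms(7) th by simp
      then show ?thesis using eq[symmetric] s K
        by (simp add: D1_def ennreal_mult[symmetric] divide_inverse)
    qed
    finally have nnI: "(\<integral>\<^sup>+x. ennreal (h x) \<partial>lborel) = ennreal (fZ (\<theta> * s/(1+\<theta> * s)) * (\<theta>/(1+\<theta> * s)^2) / K)" .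
    have hint: "integrable lborel h"
      by (rule integrableI_nn_integral_finite[OF hm _ nnI]) (simp add: hnn)
    have hI: "integral\<^sup>L lborel h = fZ (\<theta> * s/(1+\<theta> * s)) * (\<theta>/(1+\<theta> * s)^2) / K"
    proof -
      have "0 \<le> fZ (\<theta> * s/(1+\<theta> * s)) * (\<theta>/(1+\<theta> * s)^2) / K" using assms(7) th K by simp
      then show ?thesis by (subst integral_eq_nn_integral) (simp_all add: hnn nnI)
    qed
    have alg: "fZ (\<theta> * s/(1+\<theta> * s)) * (\<theta>/(1+\<theta> * s)^2) / K =
        1 / (s powr p * A (1 / (\<theta> * s))) * (\<theta> * s / (1 + \<theta> * s))\<^sup>2 * fZ (\<theta> * s / (1 + \<theta> * s))"
    proof -
      have "1 + \<theta> * s > 0" using s th by (simp add: add_pos_pos)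
      moreover have "s powr p > 0" using s by simp
      ultimately show ?thesis using s th Aa unfolding K_def Aa_def[symmetric] by (simp add: field_simps power2_eq_square)
    qed
    show "set_integrable lborel {0<..} (\<lambda>x. x * B x * fX x * (s + x) powr (- p)) \<and>
        gen_stieltjes p (\<lambda>x. x * B x * fX x) s =
          1 / (s powr p * A (1 / (\<theta> * s))) * (\<theta> * s / (1 + \<theta> * s))\<^sup>2 * fZ (\<theta> * s / (1 + \<theta> * s))"
      unfolding set_integrable_def gen_stieltjes_def set_lebesgue_integral_def h_eq
      using hint hI alg by simp
  qed
  show ?thesis unfolding is_gen_stieltjes_inverse_def
    by (rule AE_mp[OF ae AE_I2]) (use pt in blast)
qed

end
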